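(* Let $(A,m,1,\Delta',\varepsilon,T)$ be a commutative Hopf algebra over a field $k$, with $\Delta'(a)=a_{1'}\otimes a_{2'}$. Assume that $(A,A)$ (both copies being this Hopf algebra) is a Hopf matched pair with coactions $\rho(a)=a_{(-1)}\otimes a_{(0)}$ and $\varphi(a)=a_{[0]}\otimes a_{[1]}$ such that for all $a\in A$ $$a_{1'}\otimes a_{2'}=a_{1'(-1)}a_{2'[0]}\otimes a_{1'(0)}a_{2'[1]}.$$ Then $(A,\Delta,\Delta')$ is a commutative Hopf brace, where the first Hopf algebra structure $(A,m,1,\Delta,\varepsilon,S)$ is given by $$\Delta(a)=a_1\otimes a_2=a_{1'}T(a_{2'(-1)})\otimes a_{2'(0)},\qquad S(a)=a_{(-1)}T(a_{(0)}),$$ for all $a\in A$.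
   Context: All objects are over a field $k$. Hopf matched pair: for Hopf algebras $A$ and $H$, a pair $(A,H)$ with linear maps $\rho:A\to H\otimes A$, $\rho(a)=a_{(-1)}\otimes a_{(0)}$, and $\varphi:H\to H\otimes A$, $\varphi(h)=h_{[0]}\otimes h_{[1]}$, such that $(A,\rho)$ is a left $H$-comodule algebra, $(H,\varphi)$ is a right $A$-comodule algebra (coactions are algebra maps), and for all $a\in A,h\in H$ (with comultiplications written $x_1\otimes x_2$): (HM1) $a_{(-1)}\varepsilon_A(a_{(0)})=\varepsilon_A(a)1_H$, $\varepsilon_H(h_{[0]})h_{[1]}=\varepsilon_H(h)1_A$; (HM2) $a_{(-1)}\otimes a_{(0)1}\otimes a_{(0)2}=a_{1(-1)}a_{2(-1)[0]}\otimes a_{1(0)}a_{2(-1)[1]}\otimes a_{2(0)}$; (HM3) $h_{[0]1}\otimes h_{[0]2}\otimes h_{[1]}=h_{1[0]}\otimes h_{1[1](-1)}h_{2[0]}\otimes h_{1[1](0)}h_{2[1]}$; (HM4) $h_{[0]}a_{(-1)}\otimes h_{[1]}a_{(0)}=a_{(-1)}h_{[0]}\otimes a_{(0)}h_{[1]}$. A Hopf brace $(A,\Delta,\Delta')$ consists of an algebra with two Hopf algebra structures $(A,m,1,\Delta,\varepsilon,S)$ and $(A,m,1,\Delta',\epsilon,T)$ such that for all $h$: $h_{1'}\otimes h_{2'1}\otimes h_{2'2}=h_{11'}S(h_2)h_{31'}\otimes h_{12'}\otimes h_{32'}$ (where $\Delta(h)=h_1\otimes h_2$, $\Delta'(h)=h_{1'}\otimes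 h_{2'}$ and e.g. $h_{31'}$ is $\Delta'$ applied to $h_3$); it is commutative if $A$ is commutative. *)

theory Defs
  imports Complex_Main
begin

text \<open>Elements of A\<otimes>A (resp. A\<otimes>A\<otimes>A) are represented by
finite formal sums of simple tensors, i.e. lists of pairs (resp. triples).
Two such formal sums denote the same tensor iff every k-bilinear (resp. trilinear)
form takes the same value on them (over a field, (A\<otimes>A)* = Bil(A,A;k) separates
points).\<close>

definition k_algebra :: "('k::field \<Rightarrow> 'a::ring_1 \<Rightarrow> 'a) \<Rightarrow> bool" where
  "k_algebra sc \<longleftrightarrow> Vector_Spaces.vector_space sc \<and>
     (\<forall>c x y. sc c (x * y) = sc c x * y) \<and> (\<forall>c x y. sc c (x * y) = x * sc c y)"

definition flin :: "('k::field \<Rightarrow> 'a::ring_1 \<Rightarrow> 'a) \<Rightarrow> ('a \<Rightarrow> 'k) \<Rightarrow> bool" where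
  "flin sc f \<longleftrightarrow> (\<forall>x y. f (x + y) = f x + f y) \<and> (\<forall>c x. f (sc c x) = c * f x)"

definition alin :: "('k::field \<Rightarrow> 'a::ring_1 \<Rightarrow> 'a) \<Rightarrow> ('a \<Rightarrow> 'a) \<Rightarrow> bool" where
  "alin sc f \<longleftrightarrow> (\<forall>x y. f (x + y) = f x + f y) \<and> (\<forall>c x. f (sc c x) = sc c (f x))"

definition bilin :: "('k::field \<Rightarrow> 'a::ring_1 \<Rightarrow> 'a) \<Rightarrow> ('a \<Rightarrow> 'a \<Rightarrow> 'k) \<Rightarrow> bool" where
  "bilin sc \<beta> \<longleftrightarrow> (\<forall>x. flin sc (\<beta> x)) \<and> (\<forall>y. flin sc (\<lambda>x. \<beta> x y))"

definition trilin :: "('k::field \<Rightarrow> 'a::ring_1 \<Rightarrow> 'a) \<Rightarrow> ('a \<Rightarrow> 'a \<Rightarrow> 'a \<Rightarrow> 'k) \<Rightarrow> bool" where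
  "trilin sc \<gamma> \<longleftrightarrow> (\<forall>x y. flin sc (\<gamma> x y)) \<and> (\<forall>x z. flin sc (\<lambda>y. \<gamma> x y z))
      \<and> (\<forall>y z. flin sc (\<lambda>x. \<gamma> x y z))"

definition teq2 :: "('k::field \<Rightarrow> 'a::ring_1 \<Rightarrow> 'a) \<Rightarrow> ('a \<times> 'a) list \<Rightarrow> ('a \<times> 'a) list \<Rightarrow> bool" where
  "teq2 sc s t \<longleftrightarrow> (\<forall>\<beta>. bilin sc \<beta> \<longrightarrow>
      sum_list (map (\<lambda>(x, y). \<beta> x y) s) = sum_list (map (\<lambda>(x, y). \<beta> x y) t))"

definition teq3 :: "('k::field \<Rightarrow> 'a::ring_1 \<Rightarrow> 'a) \<Rightarrow> ('a \<times> 'a \<times> 'a) list \<Rightarrow> ('a \<times> 'a \<times> 'a) list \<Rightarrow> bool" where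
  "teq3 sc s t \<longleftrightarrow> (\<forall>\<gamma>. trilin sc \<gamma> \<longrightarrow>
      sum_list (map (\<lambda>(x, y, z). \<gamma> x y z) s) = sum_list (map (\<lambda>(x, y, z). \<gamma> x y z) t))"

definition tmul2 :: "('a::ring_1 \<times> 'a) list \<Rightarrow> ('a \<times> 'a) list \<Rightarrow> ('a \<times> 'a) list" where
  "tmul2 s t = [(a * c, b * d). (a, b) \<leftarrow> s, (c, d) \<leftarrow> t]"

definition tlin2 :: "('k::field \<Rightarrow> 'a::ring_1 \<Rightarrow> 'a) \<Rightarrow> ('a \<Rightarrow> ('a \<times> 'a) list) \<Rightarrow> bool" where
  "tlin2 sc D \<longleftrightarrow> (\<forall>a b. teq2 sc (D (a + b)) (D a @ D b)) \<and>
     (\<forall>c a. teq2 sc (D (sc c a)) (map (\<lambda>(x, y). (sc c x, y)) (D a)))"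

definition hopf_algebra :: "('k::field \<Rightarrow> 'a::ring_1 \<Rightarrow> 'a) \<Rightarrow> ('a \<Rightarrow> ('a \<times> 'a) list)
    \<Rightarrow> ('a \<Rightarrow> 'k) \<Rightarrow> ('a \<Rightarrow> 'a) \<Rightarrow> bool" where
  "hopf_algebra sc D e S \<longleftrightarrow> k_algebra sc \<and> tlin2 sc D \<and> flin sc e \<and> alin sc S \<and>
     (\<forall>a. teq3 sc [(x, y1, y2). (x, y) \<leftarrow> D a, (y1, y2) \<leftarrow> D y]
                  [(x1, x2, y). (x, y) \<leftarrow> D a, (x1, x2) \<leftarrow> D x]) \<and>
     (\<forall>a. sum_list (map (\<lambda>(x, y). sc (e x) y) (D a)) = a) \<and>
     (\<forall>a. sum_list (map (\<lambda>(x, y). sc (e y) x) (D a)) = a) \<and>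
     (\<forall>a b. teq2 sc (D (a * b)) (tmul2 (D a) (D b))) \<and> teq2 sc (D 1) [(1, 1)] \<and>
     (\<forall>a b. e (a * b) = e a * e b) \<and> e 1 = 1 \<and>
     (\<forall>a. sum_list (map (\<lambda>(x, y). S x * y) (D a)) = sc (e a) 1) \<and>
     (\<forall>a. sum_list (map (\<lambda>(x, y). x * S y) (D a)) = sc (e a) 1)"

definition left_comodule_algebra :: "('k::field \<Rightarrow> 'a::ring_1 \<Rightarrow> 'a) \<Rightarrow> ('a \<Rightarrow> ('a \<times> 'a) list)
    \<Rightarrow> ('a \<Rightarrow> 'k) \<Rightarrow> ('a \<Rightarrow> ('a \<times> 'a) list) \<Rightarrow> bool" where
  "left_comodule_algebra sc DH eH rho \<longleftrightarrow> tlin2 sc rho \<and>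
     (\<forall>a. teq3 sc [(h1, h2, x). (h, x) \<leftarrow> rho a, (h1, h2) \<leftarrow> DH h]
                  [(h, y1, y2). (h, y) \<leftarrow> rho a, (y1, y2) \<leftarrow> rho y]) \<and>
     (\<forall>a. sum_list (map (\<lambda>(h, x). sc (eH h) x) (rho a)) = a) \<and>
     (\<forall>a b. teq2 sc (rho (a * b)) (tmul2 (rho a) (rho b))) \<and> teq2 sc (rho 1) [(1, 1)]"

definition right_comodule_algebra :: "('k::field \<Rightarrow> 'a::ring_1 \<Rightarrow> 'a) \<Rightarrow> ('a \<Rightarrow> ('a \<times> 'a) list)
    \<Rightarrow> ('a \<Rightarrow> 'k) \<Rightarrow> ('a \<Rightarrow> ('a \<times> 'a) list) \<Rightarrow> bool" where
  "right_comodule_algebra sc DA eA phi \<longleftrightarrow> tlin2 sc phi \<and>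
     (\<forall>h. teq3 sc [(g0, g1, x). (g, x) \<leftarrow> phi h, (g0, g1) \<leftarrow> phi g]
                  [(g, x1, x2). (g, x) \<leftarrow> phi h, (x1, x2) \<leftarrow> DA x]) \<and>
     (\<forall>h. sum_list (map (\<lambda>(g, x). sc (eA x) g) (phi h)) = h) \<and>
     (\<forall>a b. teq2 sc (phi (a * b)) (tmul2 (phi a) (phi b))) \<and> teq2 sc (phi 1) [(1, 1)]"

definition hopf_matched_pair :: "('k::field \<Rightarrow> 'a::ring_1 \<Rightarrow> 'a)
    \<Rightarrow> ('a \<Rightarrow> ('a \<times> 'a) list) \<Rightarrow> ('a \<Rightarrow> 'k) \<Rightarrow> ('a \<Rightarrow> 'a)
    \<Rightarrow> ('a \<Rightarrow> ('a \<times> 'a) list) \<Rightarrow> ('a \<Rightarrow> 'k) \<Rightarrow> ('a \<Rightarrow> 'a)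
    \<Rightarrow> ('a \<Rightarrow> ('a \<times> 'a) list) \<Rightarrow> ('a \<Rightarrow> ('a \<times> 'a) list) \<Rightarrow> bool" where
  "hopf_matched_pair sc DA eA SA DH eH SH rho phi \<longleftrightarrow>
     hopf_algebra sc DA eA SA \<and> hopf_algebra sc DH eH SH \<and>
     left_comodule_algebra sc DH eH rho \<and> right_comodule_algebra sc DA eA phi \<and>
     \<comment> \<open>HM1\<close>
     (\<forall>a. sum_list (map (\<lambda>(h, x). sc (eA x) h) (rho a)) = sc (eA a) 1) \<and>
     (\<forall>h. sum_list (map (\<lambda>(g, x). sc (eH g) x) (phi h)) = sc (eH h) 1) \<and>
     \<comment> \<open>HM2\<close>
     (\<forall>a. teq3 sc [(h, y1, y2). (h, y) \<leftarrow> rho a, (y1, y2) \<leftarrow> DA y]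
        [(u1 * g, v1 * w, v2). (a1, a2) \<leftarrow> DA a, (u1, v1) \<leftarrow> rho a1,
                               (u2, v2) \<leftarrow> rho a2, (g, w) \<leftarrow> phi u2]) \<and>
     \<comment> \<open>HM3\<close>
     (\<forall>h. teq3 sc [(g1, g2, x). (g, x) \<leftarrow> phi h, (g1, g2) \<leftarrow> DH g]
        [(g1, u * g2, v * x2). (h1, h2) \<leftarrow> DH h, (g1, x1) \<leftarrow> phi h1,
                               (u, v) \<leftarrow> rho x1, (g2, x2) \<leftarrow> phi h2]) \<and>
     \<comment> \<open>HM4\<close>
     (\<forall>a h. teq2 sc [(g * u, x * v). (g, x) \<leftarrow> phi h, (u, v) \<leftarrow> rho a]
                     [(u * g, v * x). (g, x) \<leftarrow> phi h, (u, v) \<leftarrow> rho a])"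

definition hopf_brace :: "('k::field \<Rightarrow> 'a::ring_1 \<Rightarrow> 'a)
    \<Rightarrow> ('a \<Rightarrow> ('a \<times> 'a) list) \<Rightarrow> ('a \<Rightarrow> 'k) \<Rightarrow> ('a \<Rightarrow> 'a)
    \<Rightarrow> ('a \<Rightarrow> ('a \<times> 'a) list) \<Rightarrow> ('a \<Rightarrow> 'k) \<Rightarrow> ('a \<Rightarrow> 'a) \<Rightarrow> bool" where
  "hopf_brace sc D e S D' e' T \<longleftrightarrow> hopf_algebra sc D e S \<and> hopf_algebra sc D' e' T \<and>
     (\<forall>h. teq3 sc [(x, y1, y2). (x, y) \<leftarrow> D' h, (y1, y2) \<leftarrow> D y]
        [(r1 * S s * q1, r2, q2). (p, q) \<leftarrow> D h, (r, s) \<leftarrow> D p,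
                                  (r1, r2) \<leftarrow> D' r, (q1, q2) \<leftarrow> D' q])"

definition commutative_hopf_brace :: "('k::field \<Rightarrow> 'a::ring_1 \<Rightarrow> 'a)
    \<Rightarrow> ('a \<Rightarrow> ('a \<times> 'a) list) \<Rightarrow> ('a \<Rightarrow> 'k) \<Rightarrow> ('a \<Rightarrow> 'a)
    \<Rightarrow> ('a \<Rightarrow> ('a \<times> 'a) list) \<Rightarrow> ('a \<Rightarrow> 'k) \<Rightarrow> ('a \<Rightarrow> 'a) \<Rightarrow> bool" where
  "commutative_hopf_brace sc D e S D' e' T \<longleftrightarrow> hopf_brace sc D e S D' e' T \<and>
     (\<forall>a b::'a. a * b = b * a)"

end

theory Submission imports Defs begin

definition S2 :: "('b \<times> 'c) list \<Rightarrow> ('b \<Rightarrow> 'c \<Rightarrow> 'd::comm_monoid_add) \<Rightarrow> 'd" where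
  "S2 l f = sum_list (map (\<lambda>(x, y). f x y) l)"

lemma S2_concat[simp]: "S2 (concat (map f l)) \<beta> = sum_list (map (\<lambda>z. S2 (f z) \<beta>) l)"
  by (induction l) (auto simp: S2_def)
lemma S2_map[simp]: "S2 (map f l) \<beta> = sum_list (map (\<lambda>z. \<beta> (fst (f z)) (snd (f z))) l)"
  by (induction l) (auto simp: S2_def split: prod.splits)
lemma S2_append[simp]: "S2 (l1 @ l2) \<beta> = S2 l1 \<beta> + S2 l2 \<beta>"
  by (simp add: S2_def)
lemma S2_Nil[simp]: "S2 [] \<beta> = 0" by (simp add: S2_def)
lemma S2_Cons[simp]: "S2 ((a,b) # l) \<beta> = \<beta> a b + S2 l \<beta>" by (simp add: S2_def)
lemma sum_list_pair[simp]: "sum_list (map h (l :: ('b \<times> 'c) list)) = S2 l (\<lambda>x y. h (x, y))"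
  by (simp add: S2_def case_prod_beta')


lemma sep_lemma:
  fixes sc :: "'k::field \<Rightarrow> 'a::ring_1 \<Rightarrow> 'a"
  assumes vs: "Vector_Spaces.vector_space sc"
    and H: "\<And>f. flin sc f \<Longrightarrow> f x = f y"
  shows "x = y"
proof (rule ccontr)
  interpret V: vector_space sc by (rule vs)
  assume ne: "x \<noteq> y"
  define z where "z = x - y"
  have z0: "z \<noteq> 0" using ne by (simp add: z_def)
  have ind: "V.independent {z}" using z0 by (simp add: V.independent_insert)
  define B where "B = V.extend_basis {z}"
  have iB: "V.independent B" unfolding B_def by (rule V.independent_extend_basis[OF ind])
  have sB: "V.span B = UNIV" unfolding B_def by (rule V.span_extend_basis[OF ind])
  have zB: "z \<in> B" using V.extend_basis_superset[OF ind] unfolding B_def by auto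
  define f where "f v = V.representation B v z" for v
  have fl: "flin sc f" unfolding flin_def f_def
    using V.representation_add[OF iB] V.representation_scale[OF iB] sB by auto
  have "f z = 1" unfolding f_def using V.representation_basis[OF iB zB] by simp
  moreover have "f z = f x - f y"
  proof -
    have "f x = f (z + y)" by (simp add: z_def)
    also have "\<dots> = f z + f y" using fl by (simp add: flin_def)
    finally show ?thesis by simp
  qed
  ultimately show False using H[OF fl] by simp
qed

lemma bilinI: "(\<And>x. flin sc (\<beta> x)) \<Longrightarrow> (\<And>y. flin sc (\<lambda>x. \<beta> x y)) \<Longrightarrow> bilin sc \<beta>"
  by (simp add: bilin_def)
lemma trilinI: "(\<And>x y. flin sc (\<gamma> x y)) \<Longrightarrow> (\<And>x z. flin sc (\<lambda>y. \<gamma> x y z)) \<Longrightarrow>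
   (\<And>y z. flin sc (\<lambda>x. \<gamma> x y z)) \<Longrightarrow> trilin sc \<gamma>"
  by (simp add: trilin_def)

lemma flin_sum_list: "flin sc f \<Longrightarrow> f (sum_list xs) = sum_list (map f xs)"
proof (induction xs)
  case Nil
  have "f 0 = f 0 + f 0" using Nil by (metis add_0 flin_def)
  then show ?case by (metis add_cancel_left_right sum_list.Nil list.map(1))
next
  case (Cons a xs) then show ?case by (simp add: flin_def)
qed

lemma flin_S2: "flin sc f \<Longrightarrow> f (S2 l F) = S2 l (\<lambda>x y. f (F x y))"
  by (simp add: S2_def flin_sum_list o_def case_prod_beta' del: sum_list_pair)

lemma alin_sum_list: "alin sc f \<Longrightarrow> f (sum_list xs) = sum_list (map f xs)"
proof (induction xs)
  case Nil
  have "f 0 = f 0 + f 0" using Nil by (metis add_0 alin_def)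
  then show ?case by (metis add_cancel_left_right sum_list.Nil list.map(1))
next
  case (Cons a xs) then show ?case by (simp add: alin_def)
qed

lemma alin_S2: "alin sc f \<Longrightarrow> f (S2 l F) = S2 l (\<lambda>x y. f (F x y))"
  by (simp add: S2_def alin_sum_list o_def case_prod_beta' del: sum_list_pair)

lemma S2_add: "S2 l (\<lambda>x y. F x y + G x y) = S2 l F + S2 l G"
  by (induction l) (auto simp: ac_simps)
lemma S2_cmult: "S2 l (\<lambda>x y. (c::'d::semiring_0) * F x y) = c * S2 l F"
  by (induction l) (auto simp: algebra_simps)
lemma S2_multc: "S2 l (\<lambda>x y. F x y * (c::'d::semiring_0)) = S2 l F * c"
  by (induction l) (auto simp: algebra_simps)
lemma S2_zero: "S2 l (\<lambda>x y. 0) = 0" by (induction l) auto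
lemma S2_swap: "S2 l (\<lambda>x y. S2 m (\<lambda>u v. F x y u v)) = S2 m (\<lambda>u v. S2 l (\<lambda>x y. F x y u v))"
  by (induction l) (auto simp: S2_add S2_zero)
lemma S2_cong: "(\<And>x y. F x y = G x y) \<Longrightarrow> S2 l F = S2 l G"
proof -
  assume "\<And>x y. F x y = G x y"
  then have "F = G" by (intro ext)
  then show ?thesis by simp
qed

lemma flin_S2_list: "(\<And>u v. flin sc (\<lambda>x. F x u v)) \<Longrightarrow> flin sc (\<lambda>x. S2 l (F x))"
  by (induction l) (auto simp: flin_def algebra_simps)

lemma flin_add: "flin sc f \<Longrightarrow> flin sc g \<Longrightarrow> flin sc (\<lambda>x. f x + g x)"
  by (simp add: flin_def algebra_simps)
lemma flin_cmult: "flin sc f \<Longrightarrow> flin sc (\<lambda>x. c * f x)"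
  by (simp add: flin_def algebra_simps)
lemma flin_multc: "flin sc f \<Longrightarrow> flin sc (\<lambda>x. f x * c)"
  by (simp add: flin_def algebra_simps)
lemma flin_comp: "flin sc f \<Longrightarrow> alin sc g \<Longrightarrow> flin sc (\<lambda>x. f (g x))"
  by (simp add: flin_def alin_def)
lemma bil_L1: "bilin sc \<beta> \<Longrightarrow> alin sc g \<Longrightarrow> flin sc (\<lambda>x. \<beta> (g x) c)"
  by (simp add: bilin_def flin_def alin_def)
lemma bil_L2: "bilin sc \<beta> \<Longrightarrow> alin sc g \<Longrightarrow> flin sc (\<lambda>x. \<beta> c (g x))"
  by (simp add: bilin_def flin_def alin_def)
lemma tri_L1: "trilin sc \<gamma> \<Longrightarrow> alin sc g \<Longrightarrow> flin sc (\<lambda>x. \<gamma> (g x) c d)"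
  by (simp add: trilin_def flin_def alin_def)
lemma tri_L2: "trilin sc \<gamma> \<Longrightarrow> alin sc g \<Longrightarrow> flin sc (\<lambda>x. \<gamma> c (g x) d)"
  by (simp add: trilin_def flin_def alin_def)
lemma tri_L3: "trilin sc \<gamma> \<Longrightarrow> alin sc g \<Longrightarrow> flin sc (\<lambda>x. \<gamma> c d (g x))"
  by (simp add: trilin_def flin_def alin_def)

lemma alin_id: "alin sc (\<lambda>x. x)" by (simp add: alin_def)

lemma tlin2_add: "tlin2 sc D \<Longrightarrow> bilin sc \<beta> \<Longrightarrow> S2 (D (a + b)) \<beta> = S2 (D a) \<beta> + S2 (D b) \<beta>"
  unfolding tlin2_def teq2_def by (simp add: S2_def del: sum_list_pair)
lemma tlin2_scale: "tlin2 sc D \<Longrightarrow> bilin sc \<beta> \<Longrightarrow> S2 (D (sc c a)) \<beta> = c * S2 (D a) \<beta>"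
proof -
  assume t: "tlin2 sc D" and b: "bilin sc \<beta>"
  have "S2 (D (sc c a)) \<beta> = S2 (map (\<lambda>(x, y). (sc c x, y)) (D a)) \<beta>"
    using t b unfolding tlin2_def teq2_def by (simp add: S2_def del: sum_list_pair S2_map)
  also have "\<dots> = S2 (D a) (\<lambda>x y. c * \<beta> x y)"
    using b by (simp add: case_prod_beta' bilin_def flin_def)
  finally show ?thesis by (simp add: S2_cmult)
qed
lemma flin_tlin2: "tlin2 sc D \<Longrightarrow> bilin sc \<beta> \<Longrightarrow> alin sc g \<Longrightarrow> flin sc (\<lambda>x. S2 (D (g x)) \<beta>)"
  by (simp add: flin_def alin_def tlin2_add tlin2_scale)

lemma teq2D: "teq2 sc s t \<Longrightarrow> bilin sc \<beta> \<Longrightarrow> S2 s \<beta> = S2 t \<beta>"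
  unfolding teq2_def by (simp add: S2_def del: sum_list_pair)
lemma teq2I: "(\<And>\<beta>. bilin sc \<beta> \<Longrightarrow> S2 s \<beta> = S2 t \<beta>) \<Longrightarrow> teq2 sc s t"
  unfolding teq2_def by (simp add: S2_def del: sum_list_pair)
lemma teq3D: "teq3 sc s t \<Longrightarrow> trilin sc \<gamma> \<Longrightarrow> S2 s (\<lambda>x p. \<gamma> x (fst p) (snd p)) = S2 t (\<lambda>x p. \<gamma> x (fst p) (snd p))"
  unfolding teq3_def by (simp add: S2_def case_prod_beta' del: sum_list_pair)
lemma teq3I: "(\<And>\<gamma>. trilin sc \<gamma> \<Longrightarrow> S2 s (\<lambda>x p. \<gamma> x (fst p) (snd p)) = S2 t (\<lambda>x p. \<gamma> x (fst p) (snd p))) \<Longrightarrow> teq3 sc s t"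
  unfolding teq3_def by (simp add: S2_def case_prod_beta' del: sum_list_pair)


locale ctx =
  fixes sc :: "'k::field \<Rightarrow> 'a::comm_ring_1 \<Rightarrow> 'a"
    and D' :: "'a \<Rightarrow> ('a \<times> 'a) list" and e :: "'a \<Rightarrow> 'k" and T :: "'a \<Rightarrow> 'a"
    and rho :: "'a \<Rightarrow> ('a \<times> 'a) list" and phi :: "'a \<Rightarrow> ('a \<times> 'a) list"
  assumes H: "hopf_algebra sc D' e T"
    and MP: "hopf_matched_pair sc D' e T D' e T rho phi"
    and ST: "\<forall>a. teq2 sc (D' a) [(u * g, v * w). (x, y) \<leftarrow> D' a, (u, v) \<leftarrow> rho x, (g, w) \<leftarrow> phi y]"
begin

abbreviation lf where "lf \<equiv> flin sc"

lemma kal: "k_algebra sc" using H by (simp add: hopf_algebra_def)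
lemma vs: "Vector_Spaces.vector_space sc" using kal by (simp add: k_algebra_def)
lemma scm1: "sc c (x * y) = sc c x * y" using kal unfolding k_algebra_def by blast
lemma scm2: "sc c (x * y) = x * sc c y" using kal unfolding k_algebra_def by blast

sublocale V: vector_space sc by (rule vs)

lemma tD: "tlin2 sc D'" using H by (simp add: hopf_algebra_def)
lemma fe: "flin sc e" using H by (simp add: hopf_algebra_def)
lemma aT: "alin sc T" using H by (simp add: hopf_algebra_def)
lemma tR: "tlin2 sc rho" using MP by (simp add: hopf_matched_pair_def left_comodule_algebra_def)
lemma tP: "tlin2 sc phi" using MP by (simp add: hopf_matched_pair_def right_comodule_algebra_def)

lemma alin_T: "alin sc g \<Longrightarrow> alin sc (\<lambda>x. T (g x))" using aT by (simp add: alin_def)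
lemma alin_mr: "alin sc g \<Longrightarrow> alin sc (\<lambda>x. g x * c)" by (simp add: alin_def distrib_right flip: scm1)
lemma alin_ml: "alin sc g \<Longrightarrow> alin sc (\<lambda>x. c * g x)" by (simp add: alin_def distrib_left flip: scm2)
lemma alin_sc: "alin sc g \<Longrightarrow> alin sc (\<lambda>x. sc c (g x))"
  by (simp add: alin_def V.scale_right_distrib)
lemma flin_e: "alin sc g \<Longrightarrow> lf (\<lambda>x. e (g x))" using fe by (simp add: flin_def alin_def)
lemma flin_D': "bilin sc \<beta> \<Longrightarrow> alin sc g \<Longrightarrow> lf (\<lambda>x. S2 (D' (g x)) \<beta>)"
  by (rule flin_tlin2[OF tD])
lemma flin_rho: "bilin sc \<beta> \<Longrightarrow> alin sc g \<Longrightarrow> lf (\<lambda>x. S2 (rho (g x)) \<beta>)"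
  by (rule flin_tlin2[OF tR])
lemma flin_phi: "bilin sc \<beta> \<Longrightarrow> alin sc g \<Longrightarrow> lf (\<lambda>x. S2 (phi (g x)) \<beta>)"
  by (rule flin_tlin2[OF tP])

lemmas lin = bilinI trilinI flin_S2_list flin_add flin_cmult flin_multc flin_e flin_D' flin_rho flin_phi
  alin_id alin_T alin_mr alin_ml alin_sc


lemma D'coass: "trilin sc \<gamma> \<Longrightarrow> S2 (D' a) (\<lambda>x y. S2 (D' y) (\<lambda>y1 y2. \<gamma> x y1 y2))
   = S2 (D' a) (\<lambda>x y. S2 (D' x) (\<lambda>x1 x2. \<gamma> x1 x2 y))"
  using H teq3D[of sc "[(x, y1, y2). (x, y) \<leftarrow> D' a, (y1, y2) \<leftarrow> D' y]" "[(x1, x2, y). (x, y) \<leftarrow> D' a, (x1, x2) \<leftarrow> D' x]" \<gamma>]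
  by (simp add: hopf_algebra_def)
lemma D'cl: "S2 (D' a) (\<lambda>x y. sc (e x) y) = a"
  using H by (simp add: hopf_algebra_def S2_def case_prod_beta' del: sum_list_pair)
lemma D'cr: "S2 (D' a) (\<lambda>x y. sc (e y) x) = a"
  using H by (simp add: hopf_algebra_def S2_def case_prod_beta' del: sum_list_pair)
lemma D'mult: "bilin sc \<beta> \<Longrightarrow> S2 (D' (a * b)) \<beta> = S2 (D' a) (\<lambda>x y. S2 (D' b) (\<lambda>u v. \<beta> (x * u) (y * v)))"
  using H teq2D[of sc "D' (a*b)" "tmul2 (D' a) (D' b)" \<beta>] by (simp add: hopf_algebra_def tmul2_def)
lemma D'one: "bilin sc \<beta> \<Longrightarrow> S2 (D' 1) \<beta> = \<beta> 1 1"
  using H teq2D[of sc "D' 1" "[(1,1)]" \<beta>] by (simp add: hopf_algebra_def)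
lemma emult: "e (a * b) = e a * e b" using H by (simp add: hopf_algebra_def)
lemma eone: "e 1 = 1" using H by (simp add: hopf_algebra_def)
lemma antL: "S2 (D' a) (\<lambda>x y. T x * y) = sc (e a) 1"
  using H by (simp add: hopf_algebra_def S2_def case_prod_beta' del: sum_list_pair)
lemma antR: "S2 (D' a) (\<lambda>x y. x * T y) = sc (e a) 1"
  using H by (simp add: hopf_algebra_def S2_def case_prod_beta' del: sum_list_pair)

lemma Rcoass: "trilin sc \<gamma> \<Longrightarrow> S2 (rho a) (\<lambda>h x. S2 (D' h) (\<lambda>h1 h2. \<gamma> h1 h2 x))
   = S2 (rho a) (\<lambda>h y. S2 (rho y) (\<lambda>y1 y2. \<gamma> h y1 y2))"
  using MP teq3D[of sc "[(h1, h2, x). (h, x) \<leftarrow> rho a, (h1, h2) \<leftarrow> D' h]" "[(h, y1, y2). (h, y) \<leftarrow> rho a, (y1, y2) \<leftarrow> rho y]" \<gamma>]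
  by (simp add: hopf_matched_pair_def left_comodule_algebra_def)
lemma Rcu: "S2 (rho a) (\<lambda>h x. sc (e h) x) = a"
  using MP by (simp add: hopf_matched_pair_def left_comodule_algebra_def S2_def case_prod_beta' del: sum_list_pair)
lemma Rmult: "bilin sc \<beta> \<Longrightarrow> S2 (rho (a * b)) \<beta> = S2 (rho a) (\<lambda>x y. S2 (rho b) (\<lambda>u v. \<beta> (x * u) (y * v)))"
  using MP teq2D[of sc "rho (a*b)" "tmul2 (rho a) (rho b)" \<beta>] by (simp add: hopf_matched_pair_def left_comodule_algebra_def tmul2_def)
lemma Rone: "bilin sc \<beta> \<Longrightarrow> S2 (rho 1) \<beta> = \<beta> 1 1"
  using MP teq2D[of sc "rho 1" "[(1,1)]" \<beta>] by (simp add: hopf_matched_pair_def left_comodule_algebra_def)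

lemma Pcoass: "trilin sc \<gamma> \<Longrightarrow> S2 (phi h) (\<lambda>g x. S2 (phi g) (\<lambda>g0 g1. \<gamma> g0 g1 x))
   = S2 (phi h) (\<lambda>g x. S2 (D' x) (\<lambda>x1 x2. \<gamma> g x1 x2))"
  using MP teq3D[of sc "[(g0, g1, x). (g, x) \<leftarrow> phi h, (g0, g1) \<leftarrow> phi g]" "[(g, x1, x2). (g, x) \<leftarrow> phi h, (x1, x2) \<leftarrow> D' x]" \<gamma>]
  by (simp add: hopf_matched_pair_def right_comodule_algebra_def)
lemma Pcu: "S2 (phi h) (\<lambda>g x. sc (e x) g) = h"
  using MP by (simp add: hopf_matched_pair_def right_comodule_algebra_def S2_def case_prod_beta' del: sum_list_pair)
lemma Pmult: "bilin sc \<beta> \<Longrightarrow> S2 (phi (a * b)) \<beta> = S2 (phi a) (\<lambda>x y. S2 (phi b) (\<lambda>u v. \<beta> (x * u) (y * v)))"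
  using MP teq2D[of sc "phi (a*b)" "tmul2 (phi a) (phi b)" \<beta>] by (simp add: hopf_matched_pair_def right_comodule_algebra_def tmul2_def)
lemma Pone: "bilin sc \<beta> \<Longrightarrow> S2 (phi 1) \<beta> = \<beta> 1 1"
  using MP teq2D[of sc "phi 1" "[(1,1)]" \<beta>] by (simp add: hopf_matched_pair_def right_comodule_algebra_def)

lemma HM1a: "S2 (rho a) (\<lambda>h x. sc (e x) h) = sc (e a) 1"
  using MP by (simp add: hopf_matched_pair_def S2_def case_prod_beta' del: sum_list_pair)
lemma HM1b: "S2 (phi h) (\<lambda>g x. sc (e g) x) = sc (e h) 1"
  using MP by (simp add: hopf_matched_pair_def S2_def case_prod_beta' del: sum_list_pair)
lemma HM2: "trilin sc \<gamma> \<Longrightarrow> S2 (rho a) (\<lambda>h y. S2 (D' y) (\<lambda>y1 y2. \<gamma> h y1 y2)) =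
  S2 (D' a) (\<lambda>a1 a2. S2 (rho a1) (\<lambda>u1 v1. S2 (rho a2) (\<lambda>u2 v2. S2 (phi u2) (\<lambda>g w. \<gamma> (u1 * g) (v1 * w) v2))))"
  using MP teq3D[of sc "[(h, y1, y2). (h, y) \<leftarrow> rho a, (y1, y2) \<leftarrow> D' y]"
        "[(u1 * g, v1 * w, v2). (a1, a2) \<leftarrow> D' a, (u1, v1) \<leftarrow> rho a1,
                               (u2, v2) \<leftarrow> rho a2, (g, w) \<leftarrow> phi u2]" \<gamma>]
  by (simp add: hopf_matched_pair_def)
lemma STAR: "bilin sc \<beta> \<Longrightarrow> S2 (D' a) \<beta> = S2 (D' a) (\<lambda>x y. S2 (rho x) (\<lambda>u v. S2 (phi y) (\<lambda>g w. \<beta> (u * g) (v * w))))"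
  using ST teq2D[of sc "D' a" "[(u * g, v * w). (x, y) \<leftarrow> D' a, (u, v) \<leftarrow> rho x, (g, w) \<leftarrow> phi y]" \<beta>]
  by simp


lemma sepA: "(\<And>f. lf f \<Longrightarrow> f x = f y) \<Longrightarrow> x = y"
  by (rule sep_lemma[OF vs])

lemma lf_sc: "lf g \<Longrightarrow> g (sc c x) = c * g x" by (simp add: flin_def)

lemma cl_D'L: "lf g \<Longrightarrow> S2 (D' a) (\<lambda>x y. e x * g y) = g a"
  using flin_S2[of sc g "D' a" "\<lambda>x y. sc (e x) y"] by (simp add: D'cl lf_sc)
lemma cl_D'R: "lf g \<Longrightarrow> S2 (D' a) (\<lambda>x y. e y * g x) = g a"
  using flin_S2[of sc g "D' a" "\<lambda>x y. sc (e y) x"] by (simp add: D'cr lf_sc)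
lemma cl_R: "lf g \<Longrightarrow> S2 (rho a) (\<lambda>h x. e h * g x) = g a"
  using flin_S2[of sc g "rho a" "\<lambda>x y. sc (e x) y"] by (simp add: Rcu lf_sc)
lemma cl_HM1a: "lf g \<Longrightarrow> S2 (rho a) (\<lambda>h x. e x * g h) = e a * g 1"
  using flin_S2[of sc g "rho a" "\<lambda>x y. sc (e y) x"] by (simp add: HM1a lf_sc)
lemma cl_P: "lf g \<Longrightarrow> S2 (phi h) (\<lambda>u x. e x * g u) = g h"
  using flin_S2[of sc g "phi h" "\<lambda>x y. sc (e y) x"] by (simp add: Pcu lf_sc)
lemma cl_HM1b: "lf g \<Longrightarrow> S2 (phi h) (\<lambda>u x. e u * g x) = e h * g 1"
  using flin_S2[of sc g "phi h" "\<lambda>x y. sc (e x) y"] by (simp add: HM1b lf_sc)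
lemma cl_antL: "lf g \<Longrightarrow> S2 (D' a) (\<lambda>x y. g (T x * y)) = e a * g 1"
  using flin_S2[of sc g "D' a" "\<lambda>x y. T x * y"] by (simp add: antL lf_sc)
lemma cl_antR: "lf g \<Longrightarrow> S2 (D' a) (\<lambda>x y. g (x * T y)) = e a * g 1"
  using flin_S2[of sc g "D' a" "\<lambda>x y. x * T y"] by (simp add: antR lf_sc)

lemma T_mult: "T (a * b) = T a * T b"
proof (rule sepA[symmetric])
  fix f assume fl: "lf f"
  note L = lin flin_comp[OF fl]
  have "f (T a * T b) = S2 (D' a) (\<lambda>a1 a2. e a2 * f (T a1 * T b))"
    using cl_D'R[of "\<lambda>z. f (T z * T b)" a] by (simp add: L)
  also have "\<dots> = S2 (D' a) (\<lambda>a1 a2. S2 (D' b) (\<lambda>b1 b2. e b2 * (e a2 * f (T a1 * T b1))))"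
    using cl_D'R[of "\<lambda>z. e a2 * f (T a1 * T z)" b for a1 a2] by (simp add: L)
  also have "\<dots> = S2 (D' a) (\<lambda>a1 a2. S2 (D' b) (\<lambda>b1 b2. e (a2 * b2) * f (T a1 * T b1)))"
    by (simp add: emult mult_ac)
  also have "\<dots> = S2 (D' a) (\<lambda>a1 a2. S2 (D' b) (\<lambda>b1 b2. S2 (D' (a2*b2)) (\<lambda>x y. f (x * T y * (T a1 * T b1)))))"
    using cl_antR[of "\<lambda>z. f (z * (T a1 * T b1))" "a2 * b2" for a1 a2 b1 b2] by (simp add: L)
  also have "\<dots> = S2 (D' a) (\<lambda>a1 a2. S2 (D' b) (\<lambda>b1 b2. S2 (D' a2) (\<lambda>p q. S2 (D' b2) (\<lambda>p' q'. f (p * p' * T (q * q') * (T a1 * T b1))))))"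
    by (simp only: D'mult L)
  also have "\<dots> = S2 (D' a) (\<lambda>a1 a2. S2 (D' a2) (\<lambda>p q. S2 (D' b) (\<lambda>b1 b2. S2 (D' b2) (\<lambda>p' q'. f (p * p' * T (q * q') * (T a1 * T b1))))))"
    by (rule S2_cong, rule S2_swap)
  also have "\<dots> = S2 (D' a) (\<lambda>m q. S2 (D' m) (\<lambda>a1 p. S2 (D' b) (\<lambda>b1 b2. S2 (D' b2) (\<lambda>p' q'. f (p * p' * T (q * q') * (T a1 * T b1))))))"
    by (simp only: D'coass L)
  also have "\<dots> = S2 (D' a) (\<lambda>m q. S2 (D' m) (\<lambda>a1 p. S2 (D' b) (\<lambda>n q'. S2 (D' n) (\<lambda>b1 p'. f (p * p' * T (q * q') * (T a1 * T b1))))))"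
    by (simp only: D'coass L)
  also have "\<dots> = S2 (D' a) (\<lambda>m q. S2 (D' m) (\<lambda>a1 p. S2 (D' b) (\<lambda>n q'. S2 (D' n) (\<lambda>b1 p'. f (T b1 * p' * (p * T (q * q') * T a1))))))"
    by (simp add: mult_ac)
  also have "\<dots> = S2 (D' a) (\<lambda>m q. S2 (D' m) (\<lambda>a1 p. S2 (D' b) (\<lambda>n q'. e n * f (p * T (q * q') * T a1))))"
    using cl_antL[of "\<lambda>z. f (z * (p * T (q * q') * T a1))" for p q q' a1] by (simp add: L)
  also have "\<dots> = S2 (D' a) (\<lambda>m q. S2 (D' m) (\<lambda>a1 p. f (p * T (q * b) * T a1)))"
    using cl_D'L[of "\<lambda>z. f (p * T (q * z) * T a1)" b for p q a1] by (simp add: L)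
  also have "\<dots> = S2 (D' a) (\<lambda>m q. S2 (D' m) (\<lambda>a1 p. f (T a1 * p * T (q * b))))"
    by (simp add: mult_ac)
  also have "\<dots> = S2 (D' a) (\<lambda>m q. e m * f (T (q * b)))"
    using cl_antL[of "\<lambda>z. f (z * T (q * b))" for q] by (simp add: L)
  also have "\<dots> = f (T (a * b))"
    using cl_D'L[of "\<lambda>z. f (T (z * b))" a] by (simp add: L)
  finally show "f (T a * T b) = f (T (a * b))" .
qed


lemma T_one: "T 1 = 1"
proof (rule sepA)
  fix f assume fl: "lf f"
  note L = lin flin_comp[OF fl]
  have "f (T 1) = S2 (D' 1) (\<lambda>x y. f (T x * y))" by (simp add: D'one L)
  also have "\<dots> = f 1" using cl_antL[of f 1] fl by (simp add: eone)
  finally show "f (T 1) = f 1" .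
qed

lemma eT: "e (T a) = e a"
proof -
  have "e (T a) = S2 (D' a) (\<lambda>x y. e y * e (T x))"
    using cl_D'R[of "\<lambda>z. e (T z)" a] by (simp add: lin)
  also have "\<dots> = S2 (D' a) (\<lambda>x y. e (T x * y))" by (simp add: emult mult_ac)
  also have "\<dots> = e a" using cl_antL[of e a] fe by (simp add: eone)
  finally show ?thesis .
qed

definition Dn :: "'a \<Rightarrow> ('a \<times> 'a) list" where
  "Dn a = [(x * T u, v). (x, y) \<leftarrow> D' a, (u, v) \<leftarrow> rho y]"

lemma S2_Dn: "S2 (Dn a) \<beta> = S2 (D' a) (\<lambda>x y. S2 (rho y) (\<lambda>u v. \<beta> (x * T u) v))"
  by (simp add: Dn_def)

lemma flin_Dn: assumes b: "bilin sc \<beta>" and g: "alin sc g" shows "lf (\<lambda>x. S2 (Dn (g x)) \<beta>)"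
  unfolding S2_Dn by (intro lin bil_L1[OF b] bil_L2[OF b] g)

lemmas linn = lin flin_Dn


lemma G3: "bilin sc \<beta> \<Longrightarrow> S2 (Dn (a * b)) \<beta> = S2 (Dn a) (\<lambda>x y. S2 (Dn b) (\<lambda>u v. \<beta> (x * u) (y * v)))"
proof -
  assume b: "bilin sc \<beta>"
  note L = linn bil_L1[OF b] bil_L2[OF b]
  have "S2 (Dn (a * b)) \<beta> = S2 (D' a) (\<lambda>x1 y1. S2 (D' b) (\<lambda>x2 y2. S2 (rho y1) (\<lambda>u1 v1. S2 (rho y2) (\<lambda>u2 v2.
      \<beta> (x1 * x2 * T (u1 * u2)) (v1 * v2)))))"
    by (simp only: S2_Dn D'mult Rmult L)
  also have "\<dots> = S2 (D' a) (\<lambda>x1 y1. S2 (D' b) (\<lambda>x2 y2. S2 (rho y1) (\<lambda>u1 v1. S2 (rho y2) (\<lambda>u2 v2.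
      \<beta> (x1 * T u1 * (x2 * T u2)) (v1 * v2)))))"
    by (simp add: T_mult mult_ac)
  also have "\<dots> = S2 (D' a) (\<lambda>x1 y1. S2 (rho y1) (\<lambda>u1 v1. S2 (D' b) (\<lambda>x2 y2. S2 (rho y2) (\<lambda>u2 v2.
      \<beta> (x1 * T u1 * (x2 * T u2)) (v1 * v2)))))"
    by (rule S2_cong, rule S2_swap)
  also have "\<dots> = S2 (Dn a) (\<lambda>x y. S2 (Dn b) (\<lambda>u v. \<beta> (x * u) (y * v)))"
    by (simp only: S2_Dn)
  finally show ?thesis .
qed


lemma Dn_one: "bilin sc \<beta> \<Longrightarrow> S2 (Dn 1) \<beta> = \<beta> 1 1"
proof -
  assume b: "bilin sc \<beta>"
  note L = linn bil_L1[OF b] bil_L2[OF b]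
  have "S2 (Dn 1) \<beta> = \<beta> (1 * T 1) 1" by (simp only: S2_Dn D'one Rone L)
  then show ?thesis by (simp add: T_one)
qed

lemma Claim2: "bilin sc \<beta> \<Longrightarrow>
  S2 (D' h) (\<lambda>h1 h2. S2 (Dn (T h1)) (\<lambda>p q. S2 (Dn h2) (\<lambda>p' q'. \<beta> (p * p') (q * q')))) = e h * \<beta> 1 1"
proof -
  assume b: "bilin sc \<beta>"
  note L = linn bil_L1[OF b] bil_L2[OF b]
  have lg: "lf (\<lambda>z. S2 (Dn z) \<beta>)" using flin_Dn[OF b alin_id] .
  have "S2 (D' h) (\<lambda>h1 h2. S2 (Dn (T h1)) (\<lambda>p q. S2 (Dn h2) (\<lambda>p' q'. \<beta> (p * p') (q * q'))))
     = S2 (D' h) (\<lambda>h1 h2. S2 (Dn (T h1 * h2)) \<beta>)"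
    by (simp only: G3 b)
  also have "\<dots> = S2 (Dn (S2 (D' h) (\<lambda>h1 h2. T h1 * h2))) \<beta>"
    using flin_S2[OF lg, of "D' h" "\<lambda>h1 h2. T h1 * h2"] by simp
  also have "\<dots> = e h * \<beta> 1 1"
    using lf_sc[OF lg] by (simp add: antL Dn_one b) 
  finally show ?thesis .
qed


lemma Claim1: "bilin sc \<beta> \<Longrightarrow>
  S2 (D' h) (\<lambda>h1 h2. S2 (Dn h1) (\<lambda>p q. S2 (D' h2) (\<lambda>k1 k2. S2 (phi k1) (\<lambda>g w. \<beta> (p * T g) (q * (w * T k2)))))) = e h * \<beta> 1 1"
proof -
  assume b: "bilin sc \<beta>"
  note L = linn bil_L1[OF b] bil_L2[OF b]
  have "S2 (D' h) (\<lambda>h1 h2. S2 (Dn h1) (\<lambda>p q. S2 (D' h2) (\<lambda>k1 k2. S2 (phi k1) (\<lambda>g w. \<beta> (p * T g) (q * (w * T k2))))))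
    = S2 (D' h) (\<lambda>h1 h2. S2 (D' h1) (\<lambda>x y. S2 (rho y) (\<lambda>u v. S2 (D' h2) (\<lambda>k1 k2. S2 (phi k1) (\<lambda>g w. \<beta> (x * T u * T g) (v * (w * T k2)))))))"
    by (simp only: S2_Dn)
  also have "\<dots> = S2 (D' h) (\<lambda>h1 h2. S2 (D' h1) (\<lambda>x y. S2 (D' h2) (\<lambda>k1 k2. S2 (rho y) (\<lambda>u v. S2 (phi k1) (\<lambda>g w. \<beta> (x * T u * T g) (v * (w * T k2)))))))"
    by (intro S2_cong S2_swap)
  also have "\<dots> = S2 (D' h) (\<lambda>x r. S2 (D' r) (\<lambda>y h2. S2 (D' h2) (\<lambda>k1 k2. S2 (rho y) (\<lambda>u v. S2 (phi k1) (\<lambda>g w. \<beta> (x * T u * T g) (v * (w * T k2)))))))"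
    by (simp only: D'coass[symmetric] L)
  also have "\<dots> = S2 (D' h) (\<lambda>x r. S2 (D' r) (\<lambda>m k2. S2 (D' m) (\<lambda>y k1. S2 (rho y) (\<lambda>u v. S2 (phi k1) (\<lambda>g w. \<beta> (x * T u * T g) (v * (w * T k2)))))))"
    by (rule S2_cong, simp only: D'coass L)
  also have "\<dots> = S2 (D' h) (\<lambda>x r. S2 (D' r) (\<lambda>m k2. S2 (D' m) (\<lambda>y k1. \<beta> (x * T y) (k1 * T k2))))"
    using STAR[of "\<lambda>X Y. \<beta> (x * T X) (Y * T k2)" m for x k2 m] by (simp add: T_mult mult_ac L)
  also have "\<dots> = S2 (D' h) (\<lambda>x r. S2 (D' r) (\<lambda>y n. S2 (D' n) (\<lambda>k1 k2. \<beta> (x * T y) (k1 * T k2))))"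
    by (rule S2_cong, simp only: D'coass[symmetric] L)
  also have "\<dots> = S2 (D' h) (\<lambda>x r. S2 (D' r) (\<lambda>y n. e n * \<beta> (x * T y) 1))"
    using cl_antR[of "\<lambda>z. \<beta> (x * T y) z" for x y] by (simp add: L)
  also have "\<dots> = S2 (D' h) (\<lambda>x r. \<beta> (x * T r) 1)"
    using cl_D'R[of "\<lambda>z. \<beta> (x * T z) 1" for x] by (simp add: L)
  also have "\<dots> = e h * \<beta> 1 1"
    using cl_antR[of "\<lambda>z. \<beta> z 1"] by (simp add: L)
  finally show ?thesis .
qed


lemma K: "bilin sc \<beta> \<Longrightarrow> S2 (Dn (T h)) \<beta> = S2 (D' h) (\<lambda>h1 h2. S2 (phi h1) (\<lambda>g w. \<beta> (T g) (w * T h2)))"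
proof -
  assume b: "bilin sc \<beta>"
  note L = linn bil_L1[OF b] bil_L2[OF b]
  have "S2 (Dn (T h)) \<beta> = S2 (D' h) (\<lambda>h1 h2. e h2 * S2 (Dn (T h1)) \<beta>)"
    using cl_D'R[of "\<lambda>z. S2 (Dn (T z)) \<beta>" h] by (simp add: L)
  also have "\<dots> = S2 (D' h) (\<lambda>h1 h2. S2 (Dn (T h1)) (\<lambda>p q. e h2 * \<beta> p q))"
    by (simp add: S2_cmult)
  also have "\<dots> = S2 (D' h) (\<lambda>h1 h2. S2 (Dn (T h1)) (\<lambda>p q. S2 (D' h2) (\<lambda>c1 c2. S2 (Dn c1) (\<lambda>r s.
      S2 (D' c2) (\<lambda>k1 k2. S2 (phi k1) (\<lambda>g w. \<beta> (p * (r * T g)) (q * (s * (w * T k2)))))))))"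
    using Claim1[of "\<lambda>X Y. \<beta> (p * X) (q * Y)" h2 for p q h2] by (simp add: L)
  also have "\<dots> = S2 (D' h) (\<lambda>h1 h2. S2 (D' h2) (\<lambda>c1 c2. S2 (Dn (T h1)) (\<lambda>p q. S2 (Dn c1) (\<lambda>r s.
      S2 (D' c2) (\<lambda>k1 k2. S2 (phi k1) (\<lambda>g w. \<beta> (p * (r * T g)) (q * (s * (w * T k2)))))))))"
    by (intro S2_cong S2_swap)
  also have "\<dots> = S2 (D' h) (\<lambda>m c2. S2 (D' m) (\<lambda>h1 c1. S2 (Dn (T h1)) (\<lambda>p q. S2 (Dn c1) (\<lambda>r s.
      S2 (D' c2) (\<lambda>k1 k2. S2 (phi k1) (\<lambda>g w. \<beta> (p * (r * T g)) (q * (s * (w * T k2)))))))))"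
    by (simp only: D'coass L)
  also have "\<dots> = S2 (D' h) (\<lambda>m c2. e m * S2 (D' c2) (\<lambda>k1 k2. S2 (phi k1) (\<lambda>g w. \<beta> (T g) (w * T k2))))"
    using Claim2[of "\<lambda>X Y. S2 (D' c2) (\<lambda>k1 k2. S2 (phi k1) (\<lambda>g w. \<beta> (X * T g) (Y * (w * T k2))))" m for c2 m]
    by (simp add: L mult_ac)
  also have "\<dots> = S2 (D' h) (\<lambda>h1 h2. S2 (phi h1) (\<lambda>g w. \<beta> (T g) (w * T h2)))"
    using cl_D'L[of "\<lambda>z. S2 (D' z) (\<lambda>k1 k2. S2 (phi k1) (\<lambda>g w. \<beta> (T g) (w * T k2)))" h] by (simp add: L)
  finally show ?thesis .
qed


lemma Dn_coass: "trilin sc \<gamma> \<Longrightarrow>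
  S2 (Dn a) (\<lambda>x y. S2 (Dn y) (\<lambda>y1 y2. \<gamma> x y1 y2)) = S2 (Dn a) (\<lambda>x y. S2 (Dn x) (\<lambda>x1 x2. \<gamma> x1 x2 y))"
proof -
  assume t: "trilin sc \<gamma>"
  note L = linn tri_L1[OF t] tri_L2[OF t] tri_L3[OF t]
  have "S2 (Dn a) (\<lambda>x y. S2 (Dn y) (\<lambda>y1 y2. \<gamma> x y1 y2))
    = S2 (D' a) (\<lambda>a1 a2. S2 (rho a2) (\<lambda>u v. S2 (D' v) (\<lambda>w1 w2. S2 (rho w2) (\<lambda>s t. \<gamma> (a1 * T u) (w1 * T s) t))))"
    by (simp only: S2_Dn)
  also have "\<dots> = S2 (D' a) (\<lambda>a1 a2. S2 (D' a2) (\<lambda>c1 c2. S2 (rho c1) (\<lambda>u1 v1. S2 (rho c2) (\<lambda>u2 v2.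
     S2 (phi u2) (\<lambda>g w. S2 (rho v2) (\<lambda>s t. \<gamma> (a1 * T (u1 * g)) (v1 * w * T s) t))))))"
    by (simp only: HM2 L)
  also have "\<dots> = S2 (D' a) (\<lambda>a1 a2. S2 (D' a2) (\<lambda>c1 c2. S2 (rho c1) (\<lambda>u1 v1. S2 (rho c2) (\<lambda>u2 v2.
     S2 (rho v2) (\<lambda>s t. S2 (phi u2) (\<lambda>g w. \<gamma> (a1 * T (u1 * g)) (v1 * w * T s) t))))))"
    by (intro S2_cong S2_swap)
  also have "\<dots> = S2 (D' a) (\<lambda>a1 a2. S2 (D' a2) (\<lambda>c1 c2. S2 (rho c1) (\<lambda>u1 v1. S2 (rho c2) (\<lambda>k t.
     S2 (D' k) (\<lambda>h1 h2. S2 (phi h1) (\<lambda>g w. \<gamma> (a1 * T (u1 * g)) (v1 * w * T h2) t))))))"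
    by (simp only: Rcoass[symmetric] L)
  also have "\<dots> = S2 (D' a) (\<lambda>x y. S2 (D' y) (\<lambda>c1 c2. S2 (rho c1) (\<lambda>u1 v1. S2 (rho c2) (\<lambda>u v.
     S2 (D' u) (\<lambda>h1 h2. S2 (phi h1) (\<lambda>g w. \<gamma> (x * T u1 * T g) (v1 * (w * T h2)) v))))))"
    by (simp add: T_mult mult_ac)
  also have "\<dots> = S2 (D' a) (\<lambda>x y. S2 (D' y) (\<lambda>c1 c2. S2 (rho c2) (\<lambda>u v. S2 (rho c1) (\<lambda>u1 v1.
     S2 (D' u) (\<lambda>h1 h2. S2 (phi h1) (\<lambda>g w. \<gamma> (x * T u1 * T g) (v1 * (w * T h2)) v))))))"
    by (intro S2_cong S2_swap)
  also have "\<dots> = S2 (D' a) (\<lambda>a1 a2. S2 (D' a1) (\<lambda>a11 a12. S2 (rho a2) (\<lambda>u v. S2 (rho a12) (\<lambda>u1 v1.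
     S2 (D' u) (\<lambda>h1 h2. S2 (phi h1) (\<lambda>g w. \<gamma> (a11 * T u1 * T g) (v1 * (w * T h2)) v))))))"
    by (simp only: D'coass[symmetric] L)
  also have "\<dots> = S2 (D' a) (\<lambda>a1 a2. S2 (rho a2) (\<lambda>u v. S2 (D' a1) (\<lambda>a11 a12. S2 (rho a12) (\<lambda>u1 v1.
     S2 (D' u) (\<lambda>h1 h2. S2 (phi h1) (\<lambda>g w. \<gamma> (a11 * T u1 * T g) (v1 * (w * T h2)) v))))))"
    by (intro S2_cong S2_swap)
  also have "\<dots> = S2 (D' a) (\<lambda>a1 a2. S2 (rho a2) (\<lambda>u v. S2 (Dn a1) (\<lambda>q1 q2.
     S2 (D' u) (\<lambda>h1 h2. S2 (phi h1) (\<lambda>g w. \<gamma> (q1 * T g) (q2 * (w * T h2)) v)))))"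
    by (simp only: S2_Dn)
  also have "\<dots> = S2 (D' a) (\<lambda>a1 a2. S2 (rho a2) (\<lambda>u v. S2 (Dn a1) (\<lambda>q1 q2.
     S2 (Dn (T u)) (\<lambda>r1 r2. \<gamma> (q1 * r1) (q2 * r2) v))))"
    by (simp only: K L)
  also have "\<dots> = S2 (D' a) (\<lambda>a1 a2. S2 (rho a2) (\<lambda>u v. S2 (Dn (a1 * T u)) (\<lambda>p1 p2. \<gamma> p1 p2 v)))"
    by (simp only: G3 L)
  also have "\<dots> = S2 (Dn a) (\<lambda>x y. S2 (Dn x) (\<lambda>x1 x2. \<gamma> x1 x2 y))"
    by (simp only: S2_Dn[of a])
  finally show ?thesis .
qed


lemma mult_S2: "(c::'d::semiring_0) * S2 l F = S2 l (\<lambda>x y. c * F x y)" by (simp add: S2_cmult)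
lemma S2_mult: "S2 l F * (c::'d::semiring_0) = S2 l (\<lambda>x y. F x y * c)" by (simp add: S2_multc)

lemma cl_DnL: "lf g \<Longrightarrow> S2 (Dn a) (\<lambda>x y. e x * g y) = g a"
proof -
  assume fl: "lf g"
  note L = linn flin_comp[OF fl]
  have "S2 (Dn a) (\<lambda>x y. e x * g y) = S2 (D' a) (\<lambda>a1 a2. S2 (rho a2) (\<lambda>u v. e u * (e a1 * g v)))"
    by (simp add: S2_Dn emult eT mult_ac)
  also have "\<dots> = S2 (D' a) (\<lambda>a1 a2. e a1 * g a2)"
    using cl_R[of "\<lambda>z. e a1 * g z" for a1] by (simp add: L fl)
  also have "\<dots> = g a" using cl_D'L[OF fl] .
  finally show ?thesis .
qed

lemma cl_DnR: "lf g \<Longrightarrow> S2 (Dn a) (\<lambda>x y. e y * g x) = g a"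
proof -
  assume fl: "lf g"
  note L = linn flin_comp[OF fl]
  have "S2 (Dn a) (\<lambda>x y. e y * g x) = S2 (D' a) (\<lambda>a1 a2. S2 (rho a2) (\<lambda>u v. e v * g (a1 * T u)))"
    by (simp add: S2_Dn)
  also have "\<dots> = S2 (D' a) (\<lambda>a1 a2. e a2 * g a1)"
    using cl_HM1a[of "\<lambda>z. g (a1 * T z)" for a1] by (simp add: L fl T_one)
  also have "\<dots> = g a" using cl_D'R[OF fl] .
  finally show ?thesis .
qed

lemma Dn_cl: "S2 (Dn a) (\<lambda>x y. sc (e x) y) = a"
proof (rule sepA)
  fix f assume fl: "lf f"
  show "f (S2 (Dn a) (\<lambda>x y. sc (e x) y)) = f a"
    using cl_DnL[OF fl] by (simp add: flin_S2[OF fl] lf_sc[OF fl])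
qed

lemma Dn_cr: "S2 (Dn a) (\<lambda>x y. sc (e y) x) = a"
proof (rule sepA)
  fix f assume fl: "lf f"
  show "f (S2 (Dn a) (\<lambda>x y. sc (e y) x)) = f a"
    using cl_DnR[OF fl] by (simp add: flin_S2[OF fl] lf_sc[OF fl])
qed

definition Sn :: "'a \<Rightarrow> 'a" where "Sn a = S2 (rho a) (\<lambda>u v. u * T v)"

lemma f_Sn: "lf f \<Longrightarrow> f (Sn a) = S2 (rho a) (\<lambda>u v. f (u * T v))"
  by (simp add: Sn_def flin_S2)

lemma alin_Sn0: "alin sc Sn"
proof -
  have "Sn (x + y) = Sn x + Sn y" for x y
  proof (rule sepA)
    fix f assume fl: "lf f"
    note L = linn flin_comp[OF fl]
    have b: "bilin sc (\<lambda>u v. f (u * T v))" by (intro L)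
    show "f (Sn (x + y)) = f (Sn x + Sn y)"
      using fl by (simp add: f_Sn tlin2_add[OF tR b] flin_def)
  qed
  moreover have "Sn (sc c x) = sc c (Sn x)" for c x
  proof (rule sepA)
    fix f assume fl: "lf f"
    note L = linn flin_comp[OF fl]
    have b: "bilin sc (\<lambda>u v. f (u * T v))" by (intro L)
    show "f (Sn (sc c x)) = f (sc c (Sn x))"
      using fl by (simp add: f_Sn tlin2_scale[OF tR b] flin_def)
  qed
  ultimately show ?thesis by (simp add: alin_def)
qed

lemma alin_Sn: "alin sc g \<Longrightarrow> alin sc (\<lambda>x. Sn (g x))"
  using alin_Sn0 by (simp add: alin_def)

lemmas linS = linn alin_Sn

lemma S_mult: "Sn (a * b) = Sn a * Sn b"
proof (rule sepA)
  fix f assume fl: "lf f"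
  note L = linS flin_comp[OF fl]
  have "f (Sn (a * b)) = S2 (rho a) (\<lambda>u v. S2 (rho b) (\<lambda>u' v'. f (u * u' * T (v * v'))))"
    by (simp only: f_Sn[OF fl] Rmult L)
  also have "\<dots> = S2 (rho b) (\<lambda>u' v'. S2 (rho a) (\<lambda>u v. f (u * u' * T (v * v'))))"
    by (rule S2_swap)
  also have "\<dots> = f (Sn a * Sn b)"
    by (simp add: Sn_def S2_mult mult_S2 flin_S2[OF fl] T_mult mult_ac)
  finally show "f (Sn (a * b)) = f (Sn a * Sn b)" .
qed

lemma S_one: "Sn 1 = 1"
proof (rule sepA)
  fix f assume fl: "lf f"
  note L = linS flin_comp[OF fl]
  show "f (Sn 1) = f 1" by (simp add: f_Sn[OF fl] Rone L T_one)
qed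


lemma idS: "S2 (Dn a) (\<lambda>x y. x * Sn y) = sc (e a) 1"
proof (rule sepA)
  fix f assume fl: "lf f"
  note L = linS flin_comp[OF fl]
  have "f (S2 (Dn a) (\<lambda>x y. x * Sn y)) = S2 (D' a) (\<lambda>a1 a2. S2 (rho a2) (\<lambda>u v. S2 (rho v) (\<lambda>s t. f (a1 * T u * (s * T t)))))"
    by (simp add: S2_Dn Sn_def mult_S2 flin_S2[OF fl])
  also have "\<dots> = S2 (D' a) (\<lambda>a1 a2. S2 (rho a2) (\<lambda>k t. S2 (D' k) (\<lambda>u s. f (a1 * T u * (s * T t)))))"
    by (simp only: Rcoass[symmetric] L)
  also have "\<dots> = S2 (D' a) (\<lambda>a1 a2. S2 (rho a2) (\<lambda>k t. e k * f (a1 * T t)))"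
    using cl_antL[of "\<lambda>z. f (z * (a1 * T t))" for a1 t] by (simp add: L mult_ac)
  also have "\<dots> = S2 (D' a) (\<lambda>a1 a2. f (a1 * T a2))"
    using cl_R[of "\<lambda>z. f (a1 * T z)" for a1] by (simp add: L)
  also have "\<dots> = f (sc (e a) 1)"
    using cl_antR[OF fl] by (simp add: lf_sc[OF fl])
  finally show "f (S2 (Dn a) (\<lambda>x y. x * Sn y)) = f (sc (e a) 1)" .
qed

lemma cl_idS: "lf g \<Longrightarrow> S2 (Dn a) (\<lambda>x y. g (x * Sn y)) = e a * g 1"
proof -
  assume fl: "lf g"
  have "S2 (Dn a) (\<lambda>x y. g (x * Sn y)) = g (S2 (Dn a) (\<lambda>x y. x * Sn y))" by (rule flin_S2[OF fl, symmetric])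
  then show ?thesis by (simp add: idS lf_sc[OF fl])
qed

lemma SS: "Sn (Sn a) = a"
proof (rule sepA)
  fix f assume fl: "lf f"
  note L = linS flin_comp[OF fl]
  have "f (Sn (Sn a)) = S2 (Dn a) (\<lambda>x y. e x * f (Sn (Sn y)))"
    using cl_DnL[of "\<lambda>z. f (Sn (Sn z))" a] by (simp add: L)
  also have "\<dots> = S2 (Dn a) (\<lambda>x y. S2 (Dn x) (\<lambda>x1 x2. f (x1 * Sn x2 * Sn (Sn y))))"
    using cl_idS[of "\<lambda>z. f (z * Sn (Sn y))" x for x y] by (simp add: L)
  also have "\<dots> = S2 (Dn a) (\<lambda>x y. S2 (Dn y) (\<lambda>y1 y2. f (x * Sn y1 * Sn (Sn y2))))"
    by (simp only: Dn_coass[symmetric] L)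
  also have "\<dots> = S2 (Dn a) (\<lambda>x y. S2 (Dn y) (\<lambda>y1 y2. f (x * Sn (y1 * Sn y2))))"
    by (simp add: S_mult mult.assoc)
  also have "\<dots> = S2 (Dn a) (\<lambda>x y. e y * f (x * Sn 1))"
    using cl_idS[of "\<lambda>z. f (x * Sn z)" for x] by (simp add: L)
  also have "\<dots> = f a"
    using cl_DnR[OF fl] by (simp add: S_one)
  finally show "f (Sn (Sn a)) = f a" .
qed

lemma Sid: "S2 (Dn a) (\<lambda>x y. Sn x * y) = sc (e a) 1"
proof (rule sepA)
  fix f assume fl: "lf f"
  note L = linS flin_comp[OF fl]
  have "f (S2 (Dn a) (\<lambda>x y. Sn x * y)) = S2 (Dn a) (\<lambda>x y. f (Sn (x * Sn y)))"
    by (simp add: flin_S2[OF fl] S_mult SS)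
  also have "\<dots> = f (sc (e a) 1)"
    using cl_idS[of "\<lambda>z. f (Sn z)" a] by (simp add: L S_one lf_sc[OF fl])
  finally show "f (S2 (Dn a) (\<lambda>x y. Sn x * y)) = f (sc (e a) 1)" .
qed

lemma cl_Sid: "lf g \<Longrightarrow> S2 (Dn a) (\<lambda>x y. g (Sn x * y)) = e a * g 1"
proof -
  assume fl: "lf g"
  have "S2 (Dn a) (\<lambda>x y. g (Sn x * y)) = g (S2 (Dn a) (\<lambda>x y. Sn x * y))" by (rule flin_S2[OF fl, symmetric])
  then show ?thesis by (simp add: Sid lf_sc[OF fl])
qed


lemma P2: "bilin sc \<beta> \<Longrightarrow> S2 (D' a) \<beta> = S2 (Dn a) (\<lambda>p q. S2 (rho q) (\<lambda>u v. \<beta> (p * u) v))"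
proof -
  assume b: "bilin sc \<beta>"
  note L = linS bil_L1[OF b] bil_L2[OF b]
  have "S2 (Dn a) (\<lambda>p q. S2 (rho q) (\<lambda>u v. \<beta> (p * u) v))
     = S2 (D' a) (\<lambda>a1 a2. S2 (rho a2) (\<lambda>k t. S2 (rho t) (\<lambda>u v. \<beta> (a1 * T k * u) v)))"
    by (simp only: S2_Dn)
  also have "\<dots> = S2 (D' a) (\<lambda>a1 a2. S2 (rho a2) (\<lambda>h t. S2 (D' h) (\<lambda>k u. \<beta> (a1 * T k * u) t)))"
    by (simp only: Rcoass[symmetric] L)
  also have "\<dots> = S2 (D' a) (\<lambda>a1 a2. S2 (rho a2) (\<lambda>h t. e h * \<beta> a1 t))"
    using cl_antL[of "\<lambda>z. \<beta> (a1 * z) t" for a1 t] by (simp add: L mult_ac)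
  also have "\<dots> = S2 (D' a) \<beta>"
    using cl_R[of "\<lambda>z. \<beta> a1 z" for a1] by (simp add: L)
  finally show ?thesis by simp
qed

lemma INS: "bilin sc \<beta> \<Longrightarrow>
  S2 (D' c) (\<lambda>c1 c2. S2 (rho (T c1)) (\<lambda>p q. S2 (rho c2) (\<lambda>p' q'. \<beta> (p * p') (q * q')))) = e c * \<beta> 1 1"
proof -
  assume b: "bilin sc \<beta>"
  note L = linS bil_L1[OF b] bil_L2[OF b]
  have lg: "lf (\<lambda>z. S2 (rho z) \<beta>)" using flin_rho[OF b alin_id] .
  have "S2 (D' c) (\<lambda>c1 c2. S2 (rho (T c1 * c2)) \<beta>)
     = S2 (D' c) (\<lambda>c1 c2. S2 (rho (T c1)) (\<lambda>p q. S2 (rho c2) (\<lambda>p' q'. \<beta> (p * p') (q * q'))))"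
    by (simp only: Rmult b)
  moreover have "S2 (D' c) (\<lambda>c1 c2. S2 (rho (T c1 * c2)) \<beta>) = S2 (rho (S2 (D' c) (\<lambda>c1 c2. T c1 * c2))) \<beta>"
    using flin_S2[OF lg, of "D' c" "\<lambda>c1 c2. T c1 * c2"] by simp
  moreover have "\<dots> = e c * \<beta> 1 1"
    using lf_sc[OF lg] by (simp add: antL Rone b)
  ultimately show ?thesis by simp
qed

lemma Cl: "bilin sc \<beta> \<Longrightarrow>
  S2 (D' c) (\<lambda>c1 c2. S2 (rho c1) (\<lambda>p q. S2 (D' c2) (\<lambda>d1 d2. S2 (phi d1) (\<lambda>g w. \<beta> (p * g) (q * (w * T d2)))))) = \<beta> c 1"
proof -
  assume b: "bilin sc \<beta>"
  note L = linS bil_L1[OF b] bil_L2[OF b]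
  have "S2 (D' c) (\<lambda>c1 c2. S2 (rho c1) (\<lambda>p q. S2 (D' c2) (\<lambda>d1 d2. S2 (phi d1) (\<lambda>g w. \<beta> (p * g) (q * (w * T d2))))))
    = S2 (D' c) (\<lambda>c1 c2. S2 (D' c2) (\<lambda>d1 d2. S2 (rho c1) (\<lambda>p q. S2 (phi d1) (\<lambda>g w. \<beta> (p * g) (q * (w * T d2))))))"
    by (intro S2_cong S2_swap)
  also have "\<dots> = S2 (D' c) (\<lambda>m d2. S2 (D' m) (\<lambda>c1 d1. S2 (rho c1) (\<lambda>p q. S2 (phi d1) (\<lambda>g w. \<beta> (p * g) (q * (w * T d2))))))"
    by (simp only: D'coass L)
  also have "\<dots> = S2 (D' c) (\<lambda>m d2. S2 (D' m) (\<lambda>m1 m2. \<beta> m1 (m2 * T d2)))"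
    using STAR[of "\<lambda>X Y. \<beta> X (Y * T d2)" m for d2 m] by (simp add: L mult_ac)
  also have "\<dots> = S2 (D' c) (\<lambda>c1 c2. S2 (D' c2) (\<lambda>m2 d2. \<beta> c1 (m2 * T d2)))"
    by (simp only: D'coass[symmetric] L)
  also have "\<dots> = S2 (D' c) (\<lambda>c1 c2. e c2 * \<beta> c1 1)"
    using cl_antR[of "\<lambda>z. \<beta> c1 z" for c1] by (simp add: L)
  also have "\<dots> = \<beta> c 1"
    using cl_D'R[of "\<lambda>z. \<beta> z 1" c] by (simp add: L)
  finally show ?thesis .
qed

lemma K': "bilin sc \<beta> \<Longrightarrow>
  S2 (D' f) (\<lambda>f1 f2. S2 (phi f1) (\<lambda>g w. \<beta> g (w * T f2))) = S2 (D' f) (\<lambda>f1 f2. S2 (rho (T f1)) (\<lambda>p q. \<beta> (p * f2) q))"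
proof -
  assume b: "bilin sc \<beta>"
  note L = linS bil_L1[OF b] bil_L2[OF b]
  have "S2 (D' f) (\<lambda>f1 f2. S2 (phi f1) (\<lambda>g w. \<beta> g (w * T f2)))
     = S2 (D' f) (\<lambda>f1 f2. e f1 * S2 (D' f2) (\<lambda>z1 z2. S2 (phi z1) (\<lambda>g w. \<beta> g (w * T z2))))"
    using cl_D'L[of "\<lambda>z. S2 (D' z) (\<lambda>z1 z2. S2 (phi z1) (\<lambda>g w. \<beta> g (w * T z2)))" f] by (simp add: L)
  also have "\<dots> = S2 (D' f) (\<lambda>f1 f2. S2 (D' f1) (\<lambda>x1 x2. S2 (rho (T x1)) (\<lambda>p q. S2 (rho x2) (\<lambda>p' q'.
      S2 (D' f2) (\<lambda>z1 z2. S2 (phi z1) (\<lambda>g w. \<beta> (p * p' * g) (q * q' * (w * T z2))))))))"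
    using INS[of "\<lambda>X Y. S2 (D' f2) (\<lambda>z1 z2. S2 (phi z1) (\<lambda>g w. \<beta> (X * g) (Y * (w * T z2))))" f1 for f1 f2]
    by (simp add: L)
  also have "\<dots> = S2 (D' f) (\<lambda>x1 y. S2 (D' y) (\<lambda>x2 f2. S2 (rho (T x1)) (\<lambda>p q. S2 (rho x2) (\<lambda>p' q'.
      S2 (D' f2) (\<lambda>z1 z2. S2 (phi z1) (\<lambda>g w. \<beta> (p * p' * g) (q * q' * (w * T z2))))))))"
    by (simp only: D'coass[symmetric] L)
  also have "\<dots> = S2 (D' f) (\<lambda>x1 y. S2 (rho (T x1)) (\<lambda>p q. S2 (D' y) (\<lambda>x2 f2. S2 (rho x2) (\<lambda>p' q'.
      S2 (D' f2) (\<lambda>z1 z2. S2 (phi z1) (\<lambda>g w. \<beta> (p * p' * g) (q * q' * (w * T z2))))))))"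
    by (intro S2_cong S2_swap)
  also have "\<dots> = S2 (D' f) (\<lambda>x1 y. S2 (rho (T x1)) (\<lambda>p q. \<beta> (p * y) q))"
    using Cl[of "\<lambda>X Y. \<beta> (p * X) (q * Y)" y for p q y] by (simp add: L mult_ac)
  finally show ?thesis .
qed


lemma P3: "trilin sc \<gamma> \<Longrightarrow> S2 (rho a) (\<lambda>h c. S2 (Dn c) (\<lambda>c1 c2. \<gamma> h c1 c2))
   = S2 (Dn a) (\<lambda>b1 b2. S2 (rho b1) (\<lambda>u1 v1. S2 (rho b2) (\<lambda>u2 v2. \<gamma> (u1 * u2) v1 v2)))"
proof -
  assume t: "trilin sc \<gamma>"
  note L = linS tri_L1[OF t] tri_L2[OF t] tri_L3[OF t]
  have "S2 (rho a) (\<lambda>h c. S2 (Dn c) (\<lambda>c1 c2. \<gamma> h c1 c2))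
     = S2 (rho a) (\<lambda>h c. S2 (D' c) (\<lambda>w1 w2. S2 (rho w2) (\<lambda>s t. \<gamma> h (w1 * T s) t)))"
    by (simp only: S2_Dn)
  also have "\<dots> = S2 (D' a) (\<lambda>a1 a2. S2 (rho a1) (\<lambda>u1 v1. S2 (rho a2) (\<lambda>u2 v2. S2 (phi u2) (\<lambda>g w.
      S2 (rho v2) (\<lambda>s t. \<gamma> (u1 * g) (v1 * w * T s) t)))))"
    by (simp only: HM2 L)
  also have "\<dots> = S2 (D' a) (\<lambda>a1 a2. S2 (rho a1) (\<lambda>u1 v1. S2 (rho a2) (\<lambda>u2 v2. S2 (rho v2) (\<lambda>s t.
      S2 (phi u2) (\<lambda>g w. \<gamma> (u1 * g) (v1 * w * T s) t)))))"
    by (intro S2_cong S2_swap)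
  also have "\<dots> = S2 (D' a) (\<lambda>a1 a2. S2 (rho a1) (\<lambda>u1 v1. S2 (rho a2) (\<lambda>k t. S2 (D' k) (\<lambda>k1 k2.
      S2 (phi k1) (\<lambda>g w. \<gamma> (u1 * g) (v1 * w * T k2) t)))))"
    by (simp only: Rcoass[symmetric] L)
  also have "\<dots> = S2 (D' a) (\<lambda>a1 a2. S2 (rho a1) (\<lambda>u1 v1. S2 (rho a2) (\<lambda>k t. S2 (D' k) (\<lambda>k1 k2.
      S2 (rho (T k1)) (\<lambda>p q. \<gamma> (u1 * (p * k2)) (v1 * q) t)))))"
    using K'[of "\<lambda>X Y. \<gamma> (u1 * X) (v1 * Y) t" k for u1 v1 t k] by (simp add: L mult_ac)
  also have "\<dots> = S2 (D' a) (\<lambda>a1 a2. S2 (rho a2) (\<lambda>k t. S2 (rho a1) (\<lambda>u1 v1. S2 (D' k) (\<lambda>k1 k2.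
      S2 (rho (T k1)) (\<lambda>p q. \<gamma> (u1 * (p * k2)) (v1 * q) t)))))"
    by (intro S2_cong S2_swap)
  also have "\<dots> = S2 (D' a) (\<lambda>a1 a2. S2 (rho a2) (\<lambda>k t. S2 (D' k) (\<lambda>k1 k2. S2 (rho a1) (\<lambda>u1 v1.
      S2 (rho (T k1)) (\<lambda>p q. \<gamma> (u1 * (p * k2)) (v1 * q) t)))))"
    by (intro S2_cong S2_swap)
  also have "\<dots> = S2 (D' a) (\<lambda>a1 a2. S2 (rho a2) (\<lambda>k t. S2 (rho t) (\<lambda>k2 v2. S2 (rho a1) (\<lambda>u1 v1.
      S2 (rho (T k)) (\<lambda>p q. \<gamma> (u1 * (p * k2)) (v1 * q) v2)))))"
    by (simp only: Rcoass L)
  also have "\<dots> = S2 (D' a) (\<lambda>a1 a2. S2 (rho a2) (\<lambda>k t. S2 (rho a1) (\<lambda>u1 v1. S2 (rho t) (\<lambda>k2 v2.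
      S2 (rho (T k)) (\<lambda>p q. \<gamma> (u1 * (p * k2)) (v1 * q) v2)))))"
    by (intro S2_cong S2_swap)
  also have "\<dots> = S2 (D' a) (\<lambda>a1 a2. S2 (rho a2) (\<lambda>k t. S2 (rho a1) (\<lambda>u1 v1. S2 (rho (T k)) (\<lambda>p q.
      S2 (rho t) (\<lambda>k2 v2. \<gamma> (u1 * (p * k2)) (v1 * q) v2)))))"
    by (intro S2_cong S2_swap)
  also have "\<dots> = S2 (D' a) (\<lambda>a1 a2. S2 (rho a2) (\<lambda>k t. S2 (rho a1) (\<lambda>u1 v1. S2 (rho (T k)) (\<lambda>p q.
      S2 (rho t) (\<lambda>k2 v2. \<gamma> (u1 * p * k2) (v1 * q) v2)))))"
    by (simp add: mult_ac)
  also have "\<dots> = S2 (D' a) (\<lambda>a1 a2. S2 (rho a2) (\<lambda>k t. S2 (rho (a1 * T k)) (\<lambda>U V.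
      S2 (rho t) (\<lambda>u2 v2. \<gamma> (U * u2) V v2))))"
    by (simp only: Rmult L)
  also have "\<dots> = S2 (Dn a) (\<lambda>b1 b2. S2 (rho b1) (\<lambda>u1 v1. S2 (rho b2) (\<lambda>u2 v2. \<gamma> (u1 * u2) v1 v2)))"
    by (simp only: S2_Dn)
  finally show ?thesis .
qed

lemma P5: "bilin sc \<beta> \<Longrightarrow> S2 (rho m) \<beta> = S2 (Dn m) (\<lambda>s q. S2 (D' q) (\<lambda>q1 q2. \<beta> (Sn s * q1) q2))"
proof -
  assume b: "bilin sc \<beta>"
  note L = linS bil_L1[OF b] bil_L2[OF b]
  have "S2 (Dn m) (\<lambda>s q. S2 (D' q) (\<lambda>q1 q2. \<beta> (Sn s * q1) q2))
     = S2 (Dn m) (\<lambda>s q. S2 (Dn q) (\<lambda>p r. S2 (rho r) (\<lambda>u v. \<beta> (Sn s * (p * u)) v)))"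
    by (simp only: P2 L)
  also have "\<dots> = S2 (Dn m) (\<lambda>n r. S2 (Dn n) (\<lambda>s p. S2 (rho r) (\<lambda>u v. \<beta> (Sn s * (p * u)) v)))"
    by (simp only: Dn_coass L)
  also have "\<dots> = S2 (Dn m) (\<lambda>n r. e n * S2 (rho r) (\<lambda>u v. \<beta> u v))"
    using cl_Sid[of "\<lambda>z. S2 (rho r) (\<lambda>u v. \<beta> (z * u) v)" for r] by (simp add: L mult_ac)
  also have "\<dots> = S2 (rho m) \<beta>"
    using cl_DnL[of "\<lambda>z. S2 (rho z) \<beta>" m] by (simp add: L)
  finally show ?thesis by simp
qed

lemma brace: "trilin sc \<gamma> \<Longrightarrow> S2 (D' h) (\<lambda>x y. S2 (Dn y) (\<lambda>y1 y2. \<gamma> x y1 y2))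
  = S2 (Dn h) (\<lambda>p q. S2 (Dn p) (\<lambda>r s. S2 (D' r) (\<lambda>r1 r2. S2 (D' q) (\<lambda>q1 q2. \<gamma> (r1 * Sn s * q1) r2 q2))))"
proof -
  assume t: "trilin sc \<gamma>"
  note L = linS tri_L1[OF t] tri_L2[OF t] tri_L3[OF t]
  have "S2 (D' h) (\<lambda>x y. S2 (Dn y) (\<lambda>y1 y2. \<gamma> x y1 y2))
     = S2 (Dn h) (\<lambda>p q. S2 (rho q) (\<lambda>u v. S2 (Dn v) (\<lambda>y1 y2. \<gamma> (p * u) y1 y2)))"
    by (simp only: P2 L)
  also have "\<dots> = S2 (Dn h) (\<lambda>p q. S2 (Dn q) (\<lambda>b1 b2. S2 (rho b1) (\<lambda>u1 v1. S2 (rho b2) (\<lambda>u2 v2. \<gamma> (p * (u1 * u2)) v1 v2))))"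
    by (simp only: P3 L)
  also have "\<dots> = S2 (Dn h) (\<lambda>n b2. S2 (Dn n) (\<lambda>p b1. S2 (rho b1) (\<lambda>u1 v1. S2 (rho b2) (\<lambda>u2 v2. \<gamma> (p * (u1 * u2)) v1 v2))))"
    by (simp only: Dn_coass L)
  also have "\<dots> = S2 (Dn h) (\<lambda>n b2. S2 (D' n) (\<lambda>r1 r2. S2 (rho b2) (\<lambda>u2 v2. \<gamma> (r1 * u2) r2 v2)))"
    using P2[of "\<lambda>X Y. S2 (rho b2) (\<lambda>u2 v2. \<gamma> (X * u2) Y v2)" n for b2 n] by (simp add: L mult_ac)
  also have "\<dots> = S2 (Dn h) (\<lambda>r m. S2 (D' r) (\<lambda>r1 r2. S2 (Dn m) (\<lambda>s q. S2 (D' q) (\<lambda>q1 q2. \<gamma> (r1 * Sn s * q1) r2 q2))))"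
    using P5[of "\<lambda>X Y. \<gamma> (r1 * X) r2 Y" m for r1 r2 m] by (simp add: L mult_ac)
  also have "\<dots> = S2 (Dn h) (\<lambda>r m. S2 (Dn m) (\<lambda>s q. S2 (D' r) (\<lambda>r1 r2. S2 (D' q) (\<lambda>q1 q2. \<gamma> (r1 * Sn s * q1) r2 q2))))"
    by (intro S2_cong S2_swap)
  also have "\<dots> = S2 (Dn h) (\<lambda>p q. S2 (Dn p) (\<lambda>r s. S2 (D' r) (\<lambda>r1 r2. S2 (D' q) (\<lambda>q1 q2. \<gamma> (r1 * Sn s * q1) r2 q2))))"
    by (simp only: Dn_coass[symmetric] L)
  finally show ?thesis .
qed


lemma main: "commutative_hopf_brace sc Dn e Sn D' e T"
proof -
  have tl: "tlin2 sc Dn"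
    unfolding tlin2_def
  proof (intro allI conjI)
    fix a b show "teq2 sc (Dn (a + b)) (Dn a @ Dn b)"
    proof (rule teq2I)
      fix \<beta> assume b: "bilin sc \<beta>"
      show "S2 (Dn (a + b)) \<beta> = S2 (Dn a @ Dn b) \<beta>"
        using flin_Dn[OF b alin_id] by (simp add: flin_def)
    qed
  next
    fix c a show "teq2 sc (Dn (sc c a)) (map (\<lambda>(x, y). (sc c x, y)) (Dn a))"
    proof (rule teq2I)
      fix \<beta> assume b: "bilin sc \<beta>"
      have "S2 (map (\<lambda>(x, y). (sc c x, y)) (Dn a)) \<beta> = S2 (Dn a) (\<lambda>x y. c * \<beta> x y)"
        using b by (simp add: case_prod_beta' bilin_def flin_def)
      then show "S2 (Dn (sc c a)) \<beta> = S2 (map (\<lambda>(x, y). (sc c x, y)) (Dn a)) \<beta>"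
        using flin_Dn[OF b alin_id] by (simp add: flin_def S2_cmult)
    qed
  qed
  have ha: "hopf_algebra sc Dn e Sn"
    unfolding hopf_algebra_def
  proof (intro conjI allI)
    show "k_algebra sc" by (rule kal)
    show "tlin2 sc Dn" by (rule tl)
    show "flin sc e" by (rule fe)
    show "alin sc Sn" by (rule alin_Sn0)
    fix a
    show "teq3 sc [(x, y1, y2). (x, y) \<leftarrow> Dn a, (y1, y2) \<leftarrow> Dn y] [(x1, x2, y). (x, y) \<leftarrow> Dn a, (x1, x2) \<leftarrow> Dn x]"
      by (rule teq3I) (simp add: Dn_coass)
    show "sum_list (map (\<lambda>(x, y). sc (e x) y) (Dn a)) = a" using Dn_cl by simp
    show "sum_list (map (\<lambda>(x, y). sc (e y) x) (Dn a)) = a" using Dn_cr by simp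
    show "sum_list (map (\<lambda>(x, y). Sn x * y) (Dn a)) = sc (e a) 1" using Sid by simp
    show "sum_list (map (\<lambda>(x, y). x * Sn y) (Dn a)) = sc (e a) 1" using idS by simp
  next
    fix a b
    show "teq2 sc (Dn (a * b)) (tmul2 (Dn a) (Dn b))"
      by (rule teq2I) (simp add: G3 tmul2_def)
    show "e (a * b) = e a * e b" by (rule emult)
  next
    show "teq2 sc (Dn 1) [(1, 1)]" by (rule teq2I) (simp add: Dn_one)
    show "e 1 = 1" by (rule eone)
  qed
  have br: "teq3 sc [(x, y1, y2). (x, y) \<leftarrow> D' h, (y1, y2) \<leftarrow> Dn y]
        [(r1 * Sn s * q1, r2, q2). (p, q) \<leftarrow> Dn h, (r, s) \<leftarrow> Dn p,
                                  (r1, r2) \<leftarrow> D' r, (q1, q2) \<leftarrow> D' q]" for h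
    by (rule teq3I) (simp add: brace)
  show ?thesis unfolding commutative_hopf_brace_def hopf_brace_def
    using ha H br by (simp add: mult.commute)
qed

end

theorem proposition3p4:
  fixes sc :: "'k::field \<Rightarrow> 'a::comm_ring_1 \<Rightarrow> 'a"
    and D' :: "'a \<Rightarrow> ('a \<times> 'a) list" and e :: "'a \<Rightarrow> 'k" and T :: "'a \<Rightarrow> 'a"
    and rho :: "'a \<Rightarrow> ('a \<times> 'a) list" and phi :: "'a \<Rightarrow> ('a \<times> 'a) list"
  assumes "hopf_algebra sc D' e T"
    and "hopf_matched_pair sc D' e T D' e T rho phi"
    and "\<forall>a. teq2 sc (D' a) [(u * g, v * w). (x, y) \<leftarrow> D' a, (u, v) \<leftarrow> rho x, (g, w) \<leftarrow> phi y]"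
  shows "commutative_hopf_brace sc
           (\<lambda>a. [(x * T u, v). (x, y) \<leftarrow> D' a, (u, v) \<leftarrow> rho y]) e
           (\<lambda>a. sum_list (map (\<lambda>(u, v). u * T v) (rho a)))
           D' e T"
proof -
  interpret C: ctx sc D' e T rho phi using assms by (unfold_locales)
  have 1: "(\<lambda>a. [(x * T u, v). (x, y) \<leftarrow> D' a, (u, v) \<leftarrow> rho y]) = C.Dn"
    by (rule ext) (simp add: C.Dn_def)
  have 2: "(\<lambda>a. sum_list (map (\<lambda>(u, v). u * T v) (rho a))) = C.Sn"
    by (rule ext) (simp add: C.Sn_def S2_def del: sum_list_pair)
  show ?thesis unfolding 1 2 by (rule C.main)
qed

end
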